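(* Let $\lambda>0$, $\ell>0$, $a_1,a_2,a_3\in\mathbb{R}$, fix $z>0$, and consider the map $(x_0,y_0)\mapsto(x,y)$ given by $$x=x_0+\frac{\lambda z}{2\pi\ell}\left(a_1+2a_3\frac{x_0}{\ell}-2\frac{x_0y_0}{\ell^2}\right),\qquad y=y_0+\frac{\lambda z}{2\pi\ell}\left(a_2+\frac{3y_0^2-x_0^2}{\ell^2}\right).$$ Let $A'\doteq a_3+\frac{4\pi\ell^2}{3\lambda z}$. Then the set of caustic points of this map (points $(x,y)$ that are images of some $(x_0,y_0)$ at which the Jacobian determinant $\det\partial(x,y)/\partial(x_0,y_0)$ vanishes) is the closed curve $\zeta\in[0,2\pi)\mapsto(x_c(\zeta),y_c(\zeta))$ with $$x_c(\zeta)=a_1\frac{\lambda z}{2\pi\ell}+\frac{\sqrt3\,\lambda z}{2\pi\ell}A'^2\sin^2\!\left(\frac{\zeta}{2}\right)\sin(\zeta),$$ $$y_c(\zeta)=a_2\frac{\lambda z}{2\pi\ell}-\frac{\pi\ell^3}{6\lambda z}+\frac{3\lambda z}{2\pi\ell}A'^2\cos^2\!\left(\frac{\zeta}{2}\right)\cos(\zeta).$$ *)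

theory Defs
  imports "HOL-Analysis.Analysis"
begin

definition lens_map :: "real \<Rightarrow> real \<Rightarrow> real \<Rightarrow> real \<Rightarrow> real \<Rightarrow> real \<Rightarrow> real \<times> real \<Rightarrow> real \<times> real" where
  "lens_map lam l a1 a2 a3 z = (\<lambda>(x0, y0).
     (x0 + lam * z / (2 * pi * l) * (a1 + 2 * a3 * x0 / l - 2 * x0 * y0 / l^2),
      y0 + lam * z / (2 * pi * l) * (a2 + (3 * y0^2 - x0^2) / l^2)))"

definition jacobian_det :: "(real \<times> real \<Rightarrow> real \<times> real) \<Rightarrow> real \<times> real \<Rightarrow> real" where
  "jacobian_det F p =
     deriv (\<lambda>t. fst (F (t, snd p))) (fst p) * deriv (\<lambda>t. snd (F (fst p, t))) (snd p)
   - deriv (\<lambda>t. fst (F (fst p, t))) (snd p) * deriv (\<lambda>t. snd (F (t, snd p))) (fst p)"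

definition caustic_set :: "(real \<times> real \<Rightarrow> real \<times> real) \<Rightarrow> (real \<times> real) set" where
  "caustic_set F = {F p | p. jacobian_det F p = 0}"

end

theory Submission
  imports Defs
begin

lemma jac:
  fixes c l a1 a2 a3 x0 y0 :: real
  assumes "l > 0"
  shows "jacobian_det (\<lambda>(x0, y0).
     (x0 + c  *  (a1 + 2  *  a3  *  x0 / l - 2  *  x0  *  y0 / l^2),
      y0 + c  *  (a2 + (3  *  y0^2 - x0^2) / l^2))) (x0,y0)
   = (1 + c * (2 * a3/l - 2 * y0/l^2)) * (1+6 * c * y0/l^2) - (2 * c * x0/l^2)^2"
proof -
  have d1: "deriv (\<lambda>t. t + c  *  (a1 + 2  *  a3  *  t / l - 2  *  t  *  y0 / l^2)) x0 = 1 + c * (2 * a3/l - 2 * y0/l^2)"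
    using assms by (intro DERIV_imp_deriv) (auto intro!: derivative_eq_intros simp: field_simps)
  have d2: "deriv (\<lambda>t. t + c  *  (a2 + (3  *  t^2 - x0^2) / l^2)) y0 = 1+6 * c * y0/l^2"
    using assms by (intro DERIV_imp_deriv) (auto intro!: derivative_eq_intros simp: field_simps)
  have d3: "deriv (\<lambda>t. x0 + c  *  (a1 + 2  *  a3  *  x0 / l - 2  *  x0  *  t / l^2)) y0 = - 2 * c * x0/l^2"
    using assms by (intro DERIV_imp_deriv) (auto intro!: derivative_eq_intros simp: field_simps)
  have d4: "deriv (\<lambda>t. y0 + c  *  (a2 + (3  *  y0^2 - t^2) / l^2)) x0 = - 2 * c * x0/l^2"
    using assms by (intro DERIV_imp_deriv) (auto intro!: derivative_eq_intros simp: field_simps)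
  show ?thesis unfolding jacobian_det_def using assms d1 d2 d3 d4 by (simp add: power2_eq_square)
qed

lemma polyid1:
  fixes r B s k :: real
  assumes "r^2 = 3" "s^2 + k^2 = 1"
  shows "(2 * B - 1/3 - 2 * (B/2 - 1/6 + B/2 * (k^2 - s^2))) * (1 + 6 * (B/2 - 1/6 + B/2 * (k^2 - s^2))) - 4 * (r * B * s * k)^2 = 0"
proof -
  have kk: "k^2 = 1 - s^2" using assms by simp
  have "(r * B * s * k)^2 = 3 * B^2 * s^2 * (1 - s^2)" using assms(1) kk by (simp add: power_mult_distrib)
  thus ?thesis unfolding kk by (simp add: algebra_simps power2_eq_square)
qed
lemma polyid2:
  fixes r B s k :: real
  assumes "r^2 = 3" "s^2 + k^2 = 1"
  shows "(r * B * s * k) * (2 * B - 1/3 - 2 * (B/2 - 1/6 + B/2 * (k^2 - s^2))) = 2 * r * B^2 * s^3 * k"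
proof -
  have kk: "k^2 = 1 - s^2" using assms by simp
  show ?thesis unfolding kk by (simp add: algebra_simps power2_eq_square power3_eq_cube)
qed
lemma polyid3:
  fixes r B s k :: real
  assumes "r^2 = 3" "s^2 + k^2 = 1"
  shows "(B/2 - 1/6 + B/2 * (k^2 - s^2)) + 3 * (B/2 - 1/6 + B/2 * (k^2 - s^2))^2 - (r * B * s * k)^2 = -1/12 + 3 * B^2 * k^2 * (k^2 - s^2)"
proof -
  have kk: "k^2 = 1 - s^2" using assms by simp
  have "(r * B * s * k)^2 = 3 * B^2 * s^2 * (1 - s^2)" using assms(1) kk by (simp add: power_mult_distrib)
  thus ?thesis unfolding kk by (simp add: algebra_simps power2_eq_square)
qed

lemma core:
  fixes c l a1 a2 a3 w A B x0 y0 :: real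
  assumes "c > 0" "l > 0"
  assumes A_def: "A = a3 + 2 * l/(3 * c)"
    and B_def: "B = c * A/l"
    and x0_def: "x0 = l^2/c * (sqrt 3 * B/2) * sin w"
    and y0_def: "y0 = l^2/c * (B/2 - 1/6 + B/2 * cos w)"
  shows "(1 + c * (2 * a3/l - 2 * y0/l^2)) * (1+6 * c * y0/l^2) - (2 * c * x0/l^2)^2 = 0"
    "x0 + c  *  (a1 + 2  *  a3  *  x0 / l - 2  *  x0  *  y0 / l^2) = a1 * c + sqrt 3 * c * A^2 * (sin (w/2))^2 * sin w"
    "y0 + c  *  (a2 + (3  *  y0^2 - x0^2) / l^2) = a2 * c - l^2/(12 * c) + 3 * c * A^2 * (cos (w/2))^2 * cos w"
proof -
  obtain s k where s: "s = sin (w/2)" and k: "k = cos (w/2)" by blast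
  have sk: "s^2 + k^2 = 1" using s k by simp
  have sz: "sin w = 2 * s * k" using s k sin_double[of "w/2"] by simp
  have cz: "cos w = k^2 - s^2" using s k cos_double[of "w/2"] by simp
  have r3: "sqrt 3 ^2 = (3::real)" by simp
  define u where "u = sqrt 3 * B * s * k"
  define v where "v = B/2 - 1/6 + B/2 * (k^2 - s^2)"
  have P: "(2 * B - 1/3 - 2 * v) * (1 + 6 * v) - 4 * u^2 = 0"
    "u * (2 * B - 1/3 - 2 * v) = 2 * sqrt 3 * B^2 * s^3 * k"
    "v + 3 * v^2 - u^2 = -1/12 + 3 * B^2 * k^2 * (k^2 - s^2)"
    unfolding u_def v_def using polyid1[OF r3 sk] polyid2[OF r3 sk] polyid3[OF r3 sk] by auto
  have hu: "c * x0 / l^2 = u" using assms(1,2) unfolding x0_def u_def sz by (simp add: field_simps)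
  have hv: "c * y0 / l^2 = v" using assms(1,2) unfolding y0_def v_def cz by (simp add: field_simps)
  have ha: "c * a3 / l = B - 2/3" using assms(1,2) unfolding B_def A_def by (simp add: field_simps)
  have x0u: "x0 = l^2/c * u" using hu assms(1,2) by (simp add: field_simps)
  have y0v: "y0 = l^2/c * v" using hv assms(1,2) by (simp add: field_simps)
  have cA: "c * A^2 = l^2/c * B^2" using assms(1,2) unfolding B_def by (simp add: field_simps power2_eq_square)
  have e1: "(1 + c * (2 * a3/l - 2 * y0/l^2)) * (1+6 * c * y0/l^2) - (2 * c * x0/l^2)^2
      = (2 * B - 1/3 - 2 * v) * (1 + 6 * v) - 4 * u^2"
  proof -
    have "(1 + c * (2 * a3/l - 2 * y0/l^2)) * (1+6 * c * y0/l^2) - (2 * c * x0/l^2)^2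
      = (1 + 2*(c*a3/l) - 2*(c*y0/l^2)) * (1 + 6*(c*y0/l^2)) - (2*(c*x0/l^2))^2"
      by (simp add: algebra_simps)
    also have "\<dots> = (2 * B - 1/3 - 2 * v) * (1 + 6 * v) - 4 * u^2"
      unfolding ha hu hv by (simp add: algebra_simps power2_eq_square)
    finally show ?thesis .
  qed
  show "(1 + c * (2 * a3/l - 2 * y0/l^2)) * (1+6 * c * y0/l^2) - (2 * c * x0/l^2)^2 = 0"
    using e1 P(1) by simp
  have e2: "x0 + c  *  (a1 + 2  *  a3  *  x0 / l - 2  *  x0  *  y0 / l^2) = a1 * c + l^2/c * (u * (2 * B - 1/3 - 2 * v))"
  proof -
    have "x0 + c  *  (a1 + 2  *  a3  *  x0 / l - 2  *  x0  *  y0 / l^2) = a1 * c + x0 * (1 + 2*(c*a3/l) - 2*(c*y0/l^2))"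
      by (simp add: algebra_simps)
    also have "\<dots> = a1 * c + l^2/c * (u * (2 * B - 1/3 - 2 * v))"
      unfolding ha hv x0u by (simp add: algebra_simps)
    finally show ?thesis .
  qed
  show "x0 + c  *  (a1 + 2  *  a3  *  x0 / l - 2  *  x0  *  y0 / l^2) = a1 * c + sqrt 3 * c * A^2 * (sin (w/2))^2 * sin w"
  proof -
    have "sqrt 3 * c * A^2 * s^2 * (2 * s * k) = (c * A^2) * (2 * sqrt 3 * s^3 * k)"
      by (simp add: algebra_simps power2_eq_square power3_eq_cube)
    also have "\<dots> = l^2/c * (2 * sqrt 3 * B^2 * s^3 * k)" unfolding cA by simp
    finally show ?thesis unfolding e2 P(2) sz s[symmetric] by simp
  qed
  have e3: "y0 + c  *  (a2 + (3  *  y0^2 - x0^2) / l^2) = a2 * c + l^2/c * (v + 3 * v^2 - u^2)"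
    using assms(1,2) unfolding x0u y0v by (simp add: field_simps power2_eq_square)
  show "y0 + c  *  (a2 + (3  *  y0^2 - x0^2) / l^2) = a2 * c - l^2/(12 * c) + 3 * c * A^2 * (cos (w/2))^2 * cos w"
  proof -
    have "3 * c * A^2 * k^2 * (k^2 - s^2) = (c * A^2) * (3 * k^2 * (k^2 - s^2))"
      by (simp add: algebra_simps)
    also have "\<dots> = l^2/c * (3 * B^2 * k^2 * (k^2 - s^2))" unfolding cA by simp
    finally have "3 * c * A^2 * k^2 * (k^2 - s^2) = l^2/c * (3 * B^2 * k^2 * (k^2 - s^2))" .
    moreover have "l^2/c * (-1/12 + 3 * B^2 * k^2 * (k^2 - s^2)) = 0 - l^2/(12 * c) + l^2/c * (3 * B^2 * k^2 * (k^2 - s^2))"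
      by (simp add: algebra_simps)
    ultimately show ?thesis unfolding e3 P(3) cz k[symmetric] by simp
  qed
qed

lemma exist:
  fixes c l a3 A B x0 y0 :: real
  assumes "c > 0" "l > 0"
  assumes A_def: "A = a3 + 2 * l/(3 * c)"
    and B_def: "B = c * A/l"
    and det: "(1 + c * (2 * a3/l - 2 * y0/l^2)) * (1+6 * c * y0/l^2) - (2 * c * x0/l^2)^2 = 0"
  shows "\<exists>w. 0 \<le> w \<and> w < 2 * pi \<and> x0 = l^2/c * (sqrt 3 * B/2) * sin w \<and> y0 = l^2/c * (B/2 - 1/6 + B/2 * cos w)"
proof -
  define u where "u = c * x0 / l^2"
  define v where "v = c * y0 / l^2"
  define t where "t = v - (B/2 - 1/6)"
  have ha: "c * a3 / l = B - 2/3" using assms(1,2) unfolding B_def A_def by (simp add: field_simps)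
  have x0u: "x0 = l^2/c * u" using assms(1,2) unfolding u_def by (simp add: field_simps)
  have y0v: "y0 = l^2/c * v" using assms(1,2) unfolding v_def by (simp add: field_simps)
  have "(1 + c * (2 * a3/l - 2 * y0/l^2)) * (1+6 * c * y0/l^2) - (2 * c * x0/l^2)^2
      = (1 + 2*(c*a3/l) - 2*(c*y0/l^2)) * (1 + 6*(c*y0/l^2)) - (2*(c*x0/l^2))^2"
    by (simp add: algebra_simps)
  also have "\<dots> = (B - 2 * t) * (3 * B + 6 * t) - 4 * u^2"
    unfolding ha u_def[symmetric] v_def[symmetric] t_def by (simp add: algebra_simps power2_eq_square)
  finally have e: "4 * u^2 + 12 * t^2 = 3 * B^2" using det by (simp add: algebra_simps power2_eq_square)
  show ?thesis
  proof (cases "B = 0")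
    case True
    have "u^2 \<ge> 0" "t^2 \<ge> 0" by simp_all
    moreover have "4 * u^2 + 12 * t^2 = 0" using e True by simp
    ultimately have "u^2 = 0" "t^2 = 0" by linarith+
    then have u0: "u = 0" and "t = 0" by simp_all
    then have "v = -1/6" using True unfolding t_def by simp
    then show ?thesis using True u0 x0u y0v by (intro exI[of _ 0]) auto
  next
    case False
    have r3: "sqrt 3 ^2 = (3::real)" by simp
    have "(2 * t / B)^2 + (2 * u / (sqrt 3 * B))^2 = (12 * t^2 + 4 * u^2) / (3 * B^2)"
      using False by (simp add: field_simps power2_eq_square) 
    also have "\<dots> = 1" using e False by simp
    finally obtain w where w: "0 \<le> w" "w < 2*pi" "2 * t / B = cos w" "2 * u / (sqrt 3 * B) = sin w"
      using sincos_total_2pi by metis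
    have hu: "u = sqrt 3 * B / 2 * sin w" using w(4) False by (simp add: field_simps)
    have hv: "v = B/2 - 1/6 + B/2 * cos w" using w(3) False unfolding t_def by (simp add: field_simps)
    show ?thesis using w(1,2) unfolding x0u y0v hu hv by (intro exI[of _ w]) simp
  qed
qed

theorem mainTheorem8:
  fixes lam l a1 a2 a3 z :: real
  assumes "lam > 0" and "l > 0" and "z > 0"
  defines "A' \<equiv> a3 + 4 * pi * l^2 / (3 * lam * z)"
  shows "caustic_set (lens_map lam l a1 a2 a3 z) =
    (\<lambda>\<zeta>. (a1 * lam * z / (2 * pi * l)
            + sqrt 3 * lam * z / (2 * pi * l) * A'^2 * (sin (\<zeta> / 2))^2 * sin \<zeta>,
          a2 * lam * z / (2 * pi * l) - pi * l^3 / (6 * lam * z)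
            + 3 * lam * z / (2 * pi * l) * A'^2 * (cos (\<zeta> / 2))^2 * cos \<zeta>)) ` {0..<2 * pi}"
proof -
  define c where "c = lam * z / (2 * pi * l)"
  have c0: "c > 0" using assms(1-3) unfolding c_def by simp
  have A': "A' = a3 + 2 * l / (3 * c)" using assms(1-3) unfolding A'_def c_def by (simp add: field_simps power2_eq_square)
  define B where "B = c * A' / l"
  have F: "lens_map lam l a1 a2 a3 z = (\<lambda>(x0, y0).
     (x0 + c * (a1 + 2 * a3 * x0 / l - 2 * x0 * y0 / l^2),
      y0 + c * (a2 + (3 * y0^2 - x0^2) / l^2)))" unfolding lens_map_def c_def by simp
  have G: "(\<lambda>\<zeta>. (a1 * lam * z / (2 * pi * l)
            + sqrt 3 * lam * z / (2 * pi * l) * A'^2 * (sin (\<zeta> / 2))^2 * sin \<zeta>,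
          a2 * lam * z / (2 * pi * l) - pi * l^3 / (6 * lam * z)
            + 3 * lam * z / (2 * pi * l) * A'^2 * (cos (\<zeta> / 2))^2 * cos \<zeta>))
     = (\<lambda>w. (a1 * c + sqrt 3 * c * A'^2 * (sin (w/2))^2 * sin w,
             a2 * c - l^2/(12 * c) + 3 * c * A'^2 * (cos (w/2))^2 * cos w))"
    using assms(1-3) unfolding c_def by (auto simp: field_simps power2_eq_square power3_eq_cube; simp only: power2_eq_square)
  show ?thesis unfolding G caustic_set_def
  proof (intro equalityI subsetI)
    fix q assume "q \<in> {lens_map lam l a1 a2 a3 z p |p. jacobian_det (lens_map lam l a1 a2 a3 z) p = 0}"
    then obtain x0 y0 where q: "q = lens_map lam l a1 a2 a3 z (x0, y0)"
      and d: "jacobian_det (lens_map lam l a1 a2 a3 z) (x0, y0) = 0" by auto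
    from d have "(1 + c * (2 * a3/l - 2 * y0/l^2)) * (1+6 * c * y0/l^2) - (2 * c * x0/l^2)^2 = 0"
      unfolding F jac[OF assms(2)] .
    from exist[OF c0 assms(2) A' B_def this] obtain w where w: "0 \<le> w" "w < 2 * pi"
      "x0 = l^2/c * (sqrt 3 * B/2) * sin w" "y0 = l^2/c * (B/2 - 1/6 + B/2 * cos w)" by blast
    note K = core[OF c0 assms(2) A' B_def w(3,4)]
    show "q \<in> (\<lambda>w. (a1 * c + sqrt 3 * c * A'^2 * (sin (w/2))^2 * sin w,
             a2 * c - l^2/(12 * c) + 3 * c * A'^2 * (cos (w/2))^2 * cos w)) ` {0..<2*pi}"
      using w(1,2) unfolding q F by (auto simp: K(2,3) intro!: image_eqI[of _ _ w])
  next
    fix q assume "q \<in> (\<lambda>w. (a1 * c + sqrt 3 * c * A'^2 * (sin (w/2))^2 * sin w,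
             a2 * c - l^2/(12 * c) + 3 * c * A'^2 * (cos (w/2))^2 * cos w)) ` {0..<2*pi}"
    then obtain w where w: "w \<in> {0..<2*pi}" and q: "q = (a1 * c + sqrt 3 * c * A'^2 * (sin (w/2))^2 * sin w,
             a2 * c - l^2/(12 * c) + 3 * c * A'^2 * (cos (w/2))^2 * cos w)" by auto
    define x0 where "x0 = l^2/c * (sqrt 3 * B/2) * sin w"
    define y0 where "y0 = l^2/c * (B/2 - 1/6 + B/2 * cos w)"
    note K = core[OF c0 assms(2) A' B_def x0_def y0_def]
    have "q = lens_map lam l a1 a2 a3 z (x0, y0)" unfolding q F by (simp add: K(2,3))
    moreover have "jacobian_det (lens_map lam l a1 a2 a3 z) (x0, y0) = 0"
      unfolding F jac[OF assms(2)] by (rule K(1))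
    ultimately show "q \<in> {lens_map lam l a1 a2 a3 z p |p. jacobian_det (lens_map lam l a1 a2 a3 z) p = 0}"
      by blast
  qed
qed

end
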